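(* Let $n\ge2$, $K\ge1$, and write $\Phi_K=(P_{1,K},\dots,P_{n,K})\colon(\mathbb{C}^{n(n-1)/2})^K\to\mathbb{C}^n$. Then each $P_{k,K}$ is a polynomial that is no more than linear in each of the variables $z_{ij,l}$. Moreover, if $K$ is even, $P_{k,K}$ depends only on $Z_1,\dots,Z_{K-1}$ and the variables $z_{ij,K}$ with $1\le i<j\le k$ (in particular $P_{1,K}$ does not depend on $Z_K$); if $K$ is odd, $P_{k,K}$ depends only on $Z_1,\dots,Z_{K-1}$ and the variables $z_{ij,K}$ with $k\le j<i\le n$.
   Context: For $k$ even, $Z_k=(z_{ij,k})_{1\le i<j\le n}$ and $M_k(Z_k)$ is the upper triangular unipotent $n\times n$ matrix with entry $z_{ij,k}$ at $(i,j)$, $i<j$; for $k$ odd, $Z_k=(z_{ij,k})_{1\le j<i\le n}$ and $M_k(Z_k)$ is the lower triangular unipotent matrix with entry $z_{ij,k}$ at $(i,j)$, $i>j$. $\Psi_K(Z_1,\dots,Z_K)=M_1(Z_1)^{-1}\cdots M_K(Z_K)^{-1}$, $\pi_n$ maps a matrix to its last row, and $\Phi_K=\pi_n\circ\Psi_K$. A polynomial $p$ is no more than linear in a variable $x$ if $p=x\tilde p+\tilde q$ with $\tilde p,\tilde q$ polynomials independent of $x$. *)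

theory Defs
  imports "Jordan_Normal_Form.Matrix" Complex_Main
begin

(* Variables z_{ij,l} are indexed by triples (i,j,l) with 1-based i,j (as in the paper).
   An assignment of all variables is a function  nat \<times> nat \<times> nat \<Rightarrow> complex. *)
type_synonym var = "nat \<times> nat \<times> nat"
type_synonym assignment = "var \<Rightarrow> complex"

definition Vars :: "nat \<Rightarrow> nat \<Rightarrow> var set" where
  "Vars n K = {(i,j,l). 1 \<le> l \<and> l \<le> K \<and> 1 \<le> i \<and> i \<le> n \<and> 1 \<le> j \<and> j \<le> n \<and>
                        (if even l then i < j else j < i)}"

inductive polyfun :: "(assignment \<Rightarrow> complex) \<Rightarrow> bool" where
  pf_const: "polyfun (\<lambda>z. c)"
| pf_var:   "polyfun (\<lambda>z. z v)"
| pf_add:   "polyfun p \<Longrightarrow> polyfun q \<Longrightarrow> polyfun (\<lambda>z. p z + q z)"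
| pf_mult:  "polyfun p \<Longrightarrow> polyfun q \<Longrightarrow> polyfun (\<lambda>z. p z * q z)"

definition indep_of :: "var \<Rightarrow> (assignment \<Rightarrow> complex) \<Rightarrow> bool" where
  "indep_of v f \<longleftrightarrow> (\<forall>z c. f (z(v := c)) = f z)"

definition at_most_linear_in :: "var \<Rightarrow> (assignment \<Rightarrow> complex) \<Rightarrow> bool" where
  "at_most_linear_in v P \<longleftrightarrow>
     (\<exists>p q. polyfun p \<and> polyfun q \<and> indep_of v p \<and> indep_of v q \<and>
            (\<forall>z. P z = z v * p z + q z))"

definition depends_only_on :: "var set \<Rightarrow> (assignment \<Rightarrow> complex) \<Rightarrow> bool" where
  "depends_only_on S f \<longleftrightarrow> (\<forall>z w. (\<forall>v\<in>S. z v = w v) \<longrightarrow> f z = f w)"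

(* M_l(Z_l): unipotent n x n, upper triangular for l even, lower triangular for l odd.
   JNF matrices are 0-indexed: entry (a,b) is paper entry (a+1,b+1). *)
definition Mmat :: "nat \<Rightarrow> nat \<Rightarrow> assignment \<Rightarrow> complex mat" where
  "Mmat n l z = mat n n (\<lambda>(a,b). if a = b then 1
        else if (if even l then a < b else b < a) then z (a+1, b+1, l) else 0)"

definition mat_inv :: "nat \<Rightarrow> complex mat \<Rightarrow> complex mat" where
  "mat_inv n A = (THE B. B \<in> carrier_mat n n \<and> A * B = 1\<^sub>m n \<and> B * A = 1\<^sub>m n)"

fun Psi :: "nat \<Rightarrow> nat \<Rightarrow> assignment \<Rightarrow> complex mat" where
  "Psi n 0 z = 1\<^sub>m n"
| "Psi n (Suc K) z = Psi n K z * mat_inv n (Mmat n (Suc K) z)"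

definition Pcomp :: "nat \<Rightarrow> nat \<Rightarrow> nat \<Rightarrow> assignment \<Rightarrow> complex" where
  "Pcomp n K k z = Psi n K z $$ (n - 1, k - 1)"

end

theory Submission
  imports Defs "Jordan_Normal_Form.Determinant"
begin

definition good :: "var set \<Rightarrow> (assignment \<Rightarrow> complex) \<Rightarrow> bool" where
  "good S f \<longleftrightarrow> polyfun f \<and> depends_only_on S f \<and> (\<forall>v. at_most_linear_in v f)"

lemma dep_indep: "depends_only_on S f \<Longrightarrow> v \<notin> S \<Longrightarrow> indep_of v f"
  unfolding depends_only_on_def indep_of_def by auto

lemma good_const: "good S (\<lambda>z. c)"
  unfolding good_def depends_only_on_def at_most_linear_in_def indep_of_def
  apply (intro conjI allI impI)
    apply (rule pf_const)
   apply simp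
  apply (rule exI[of _ "\<lambda>z. 0"], rule exI[of _ "\<lambda>z. c"])
  by (auto intro!: polyfun.intros)

lemma good_var: "v \<in> S \<Longrightarrow> good S (\<lambda>z. z v)"
  unfolding good_def
proof (intro conjI allI)
  show "polyfun (\<lambda>z. z v)" by (rule pf_var)
  show "v \<in> S \<Longrightarrow> depends_only_on S (\<lambda>z. z v)" unfolding depends_only_on_def by auto
  fix w show "at_most_linear_in w (\<lambda>z. z v)"
  proof (cases "w = v")
    case True show ?thesis unfolding at_most_linear_in_def indep_of_def
      by (rule exI[of _ "\<lambda>z. 1"], rule exI[of _ "\<lambda>z. 0"]) (use True in \<open>auto intro!: polyfun.intros\<close>)
  next
    case False show ?thesis unfolding at_most_linear_in_def indep_of_def
      by (rule exI[of _ "\<lambda>z. 0"], rule exI[of _ "\<lambda>z. z v"]) (use False in \<open>auto intro!: polyfun.intros\<close>)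
  qed
qed

lemma good_mono: "good S f \<Longrightarrow> S \<subseteq> T \<Longrightarrow> good T f"
  unfolding good_def depends_only_on_def by blast

lemma good_add: "good S f \<Longrightarrow> good S g \<Longrightarrow> good S (\<lambda>z. f z + g z)"
  unfolding good_def
proof (intro conjI allI; (elim conjE)?)
  assume "polyfun f" "polyfun g" thus "polyfun (\<lambda>z. f z + g z)" by (rule pf_add)
next
  assume "depends_only_on S f" "depends_only_on S g"
  thus "depends_only_on S (\<lambda>z. f z + g z)" unfolding depends_only_on_def by metis
next
  fix v assume a: "\<forall>v. at_most_linear_in v f" "\<forall>v. at_most_linear_in v g"
  then obtain p q p' q' where "polyfun p" "polyfun q" "indep_of v p" "indep_of v q"
     "\<forall>z. f z = z v * p z + q z" "polyfun p'" "polyfun q'" "indep_of v p'" "indep_of v q'"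
     "\<forall>z. g z = z v * p' z + q' z"
    unfolding at_most_linear_in_def by meson
  thus "at_most_linear_in v (\<lambda>z. f z + g z)" unfolding at_most_linear_in_def indep_of_def
    by (intro exI[of _ "\<lambda>z. p z + p' z"] exI[of _ "\<lambda>z. q z + q' z"])
       (auto intro!: polyfun.intros simp: algebra_simps)
qed

lemma good_mult: assumes f: "good S f" and g: "good T g" and d: "S \<inter> T = {}"
  shows "good (S \<union> T) (\<lambda>z. f z * g z)"
  unfolding good_def
proof (intro conjI allI)
  show "polyfun (\<lambda>z. f z * g z)" using f g unfolding good_def by (auto intro: pf_mult)
  show "depends_only_on (S \<union> T) (\<lambda>z. f z * g z)" using f g unfolding good_def depends_only_on_def
    by (metis UnCI)
  fix v
  show "at_most_linear_in v (\<lambda>z. f z * g z)"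
  proof (cases "v \<in> S")
    case False
    hence fi: "indep_of v f" using f dep_indep unfolding good_def by blast
    obtain p q where "polyfun p" "polyfun q" "indep_of v p" "indep_of v q"
       "\<forall>z. g z = z v * p z + q z" using g unfolding good_def at_most_linear_in_def by meson
    thus ?thesis using fi f unfolding at_most_linear_in_def indep_of_def good_def
      by (intro exI[of _ "\<lambda>z. f z * p z"] exI[of _ "\<lambda>z. f z * q z"])
         (auto intro!: polyfun.intros simp: algebra_simps)
  next
    case True
    hence "v \<notin> T" using d by auto
    hence gi: "indep_of v g" using g dep_indep unfolding good_def by blast
    obtain p q where "polyfun p" "polyfun q" "indep_of v p" "indep_of v q"
       "\<forall>z. f z = z v * p z + q z" using f unfolding good_def at_most_linear_in_def by meson
    thus ?thesis using gi g unfolding at_most_linear_in_def indep_of_def good_def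
      by (intro exI[of _ "\<lambda>z. p z * g z"] exI[of _ "\<lambda>z. q z * g z"])
         (auto intro!: polyfun.intros simp: algebra_simps)
  qed
qed

lemma good_neg: "good S f \<Longrightarrow> good S (\<lambda>z. - f z)"
  using good_mult[OF good_const[of "{}" "-1"], of S f] by simp

lemma good_diff: "good S f \<Longrightarrow> good S g \<Longrightarrow> good S (\<lambda>z. f z - g z)"
  using good_add[OF _ good_neg, of S f g] by simp

lemma good_sum: "finite I \<Longrightarrow> (\<And>i. i \<in> I \<Longrightarrow> good S (f i)) \<Longrightarrow> good S (\<lambda>z. \<Sum>i\<in>I. f i z)"
proof (induction I rule: finite_induct)
  case empty thus ?case using good_const by simp
next
  case (insert x F) thus ?case using good_add[of S "f x" "\<lambda>z. \<Sum>i\<in>F. f i z"] by simp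
qed

lemma Mmat_carrier: "Mmat n l z \<in> carrier_mat n n"
  unfolding Mmat_def by simp

lemma Mmat_index: "i < n \<Longrightarrow> k < n \<Longrightarrow> Mmat n l z $$ (i,k) = (if i = k then 1
        else if (if even l then i < k else k < i) then z (i+1, k+1, l) else 0)"
  unfolding Mmat_def by simp

lemma diag_Mmat: "diag_mat (Mmat n l z) = replicate n 1"
proof -
  have "diag_mat (Mmat n l z) = map (\<lambda>_. 1) [0..<n]" unfolding diag_mat_def
    by (rule map_cong) (auto simp: Mmat_def)
  thus ?thesis by (simp add: map_replicate_const)
qed

lemma det_Mmat: "det (Mmat n l z) = 1"
proof (cases "even l")
  case True
  have "det (Mmat n l z) = prod_list (diag_mat (Mmat n l z))"
    by (rule det_upper_triangular[OF _ Mmat_carrier]) (use True in \<open>auto simp: upper_triangular_def Mmat_def\<close>)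
  also have "\<dots> = 1" by (simp add: diag_Mmat)
  finally show ?thesis .
next
  case False
  have "det (Mmat n l z) = prod_list (diag_mat (Mmat n l z))"
    by (rule det_lower_triangular[OF _ Mmat_carrier]) (use False in \<open>auto simp: Mmat_def\<close>)
  also have "\<dots> = 1" by (simp add: diag_Mmat)
  finally show ?thesis .
qed

lemma mat_inv_Mmat:
  shows "mat_inv n (Mmat n l z) \<in> carrier_mat n n \<and> Mmat n l z * mat_inv n (Mmat n l z) = 1\<^sub>m n
     \<and> mat_inv n (Mmat n l z) * Mmat n l z = 1\<^sub>m n"
proof -
  let ?M = "Mmat n l z"
  have "?M \<in> Units (ring_mat TYPE(complex) n undefined)"
    by (rule det_non_zero_imp_unit[OF Mmat_carrier]) (simp add: det_Mmat)
  hence "\<exists>B\<in>carrier_mat n n. B * ?M = 1\<^sub>m n \<and> ?M * B = 1\<^sub>m n"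
    by (simp add: Units_def ring_mat_def)
  then obtain B where B: "B \<in> carrier_mat n n" "B * ?M = 1\<^sub>m n" "?M * B = 1\<^sub>m n"
    by blast
  have uniq: "C = B" if C: "C \<in> carrier_mat n n \<and> ?M * C = 1\<^sub>m n \<and> C * ?M = 1\<^sub>m n" for C
  proof -
    have "C = 1\<^sub>m n * C" using C left_mult_one_mat[of C n n] by auto
    hence "C = (B * ?M) * C" using B by simp
    also have "\<dots> = B * (?M * C)" using B C Mmat_carrier by (metis assoc_mult_mat)
    also have "\<dots> = B" using B C by simp
    finally show ?thesis .
  qed
  have "mat_inv n ?M = B" unfolding mat_inv_def
    by (rule the_equality) (simp add: B, erule uniq)
  thus ?thesis using B by simp
qed

lemma Psi_carrier: "Psi n K z \<in> carrier_mat n n"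
  by (induction K) (use mat_inv_Mmat in auto)

lemma Psi_rec: "Psi n (Suc K) z * Mmat n (Suc K) z = Psi n K z"
proof -
  let ?M = "Mmat n (Suc K) z" let ?B = "mat_inv n ?M"
  have "Psi n (Suc K) z * ?M = Psi n K z * (?B * ?M)"
    using Psi_carrier[of n K z] mat_inv_Mmat[of n "Suc K" z] Mmat_carrier
    by (simp add: assoc_mult_mat[of _ n n _ n _ n])
  also have "\<dots> = Psi n K z" using mat_inv_Mmat[of n "Suc K" z] Psi_carrier[of n K z] by simp
  finally show ?thesis .
qed

lemma mult_index: "A \<in> carrier_mat n n \<Longrightarrow> B \<in> carrier_mat n n \<Longrightarrow> i < n \<Longrightarrow> k < n \<Longrightarrow>
  (A * B) $$ (i,k) = (\<Sum>j<n. A $$ (i,j) * B $$ (j,k))"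
proof -
  assume A: "A \<in> carrier_mat n n" and B: "B \<in> carrier_mat n n" and i: "i < n" and k: "k < n"
  have "(A * B) $$ (i,k) = row A i \<bullet> col B k" using A B i k by (simp add: index_mult_mat)
  also have "\<dots> = (\<Sum>j\<in>{0..<n}. row A i $ j * col B k $ j)" using B by (simp add: scalar_prod_def)
  also have "\<dots> = (\<Sum>j<n. A $$ (i,j) * B $$ (j,k))" unfolding lessThan_atLeast0[symmetric]
    by (rule sum.cong) (use A B i k in auto)
  finally show ?thesis .
qed

lemma key_eq: assumes "k < n"
  shows "(\<Sum>i<n. Psi n (Suc K) z $$ (n-1,i) * Mmat n (Suc K) z $$ (i,k)) = Psi n K z $$ (n-1,k)"
proof -
  have "Psi n K z $$ (n-1,k) = (Psi n (Suc K) z * Mmat n (Suc K) z) $$ (n-1,k)"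
    by (simp only: Psi_rec)
  also have "\<dots> = (\<Sum>i<n. Psi n (Suc K) z $$ (n-1,i) * Mmat n (Suc K) z $$ (i,k))"
    by (rule mult_index[OF Psi_carrier Mmat_carrier]) (use assms in auto)
  finally show ?thesis by simp
qed

lemma even_step:
  fixes f g :: "nat \<Rightarrow> assignment \<Rightarrow> complex"
  assumes eq: "\<And>k z. k < n \<Longrightarrow> f k z = g k z - (\<Sum>i<k. f i z * z (i+1,k+1,L))"
   and gg: "\<And>k. k < n \<Longrightarrow> good A (g k)"
   and nA: "\<And>a b. (a,b,L) \<notin> A"
  shows "k < n \<Longrightarrow> good (A \<union> {(a,b,l). l = L \<and> 1 \<le> a \<and> a < b \<and> b \<le> k+1}) (f k)"
proof (induction k rule: less_induct)
  case (less k)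
  let ?U = "\<lambda>k. A \<union> {(a,b,l). l = L \<and> 1 \<le> a \<and> a < b \<and> b \<le> k+1}"
  have s: "good (?U k) (\<lambda>z. \<Sum>i<k. f i z * z (i+1,k+1,L))"
  proof (rule good_sum)
    fix i assume i: "i \<in> {..<k}"
    have "good (?U i \<union> {(i+1,k+1,L)}) (\<lambda>z. f i z * z (i+1,k+1,L))"
      by (rule good_mult[OF less.IH good_var]) (use i less.prems nA in auto)
    thus "good (?U k) (\<lambda>z. f i z * z (i+1,k+1,L))" by (rule good_mono) (use i in auto)
  qed simp
  have g: "good (?U k) (g k)" by (rule good_mono[OF gg[OF less.prems]]) auto
  have "f k = (\<lambda>z. g k z - (\<Sum>i<k. f i z * z (i+1,k+1,L)))" using eq less.prems by auto
  thus ?case using good_diff[OF g s] by simp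
qed

lemma odd_step:
  fixes f g :: "nat \<Rightarrow> assignment \<Rightarrow> complex"
  assumes eq: "\<And>k z. k < n \<Longrightarrow> f k z = g k z - (\<Sum>i\<in>{k<..<n}. f i z * z (i+1,k+1,L))"
   and gg: "\<And>k. k < n \<Longrightarrow> good A (g k)"
   and nA: "\<And>a b. (a,b,L) \<notin> A"
  shows "k < n \<Longrightarrow> good (A \<union> {(a,b,l). l = L \<and> k+1 \<le> b \<and> b < a \<and> a \<le> n}) (f k)"
proof (induction k rule: measure_induct_rule[where f="\<lambda>k. n - k"])
  case (less k)
  let ?U = "\<lambda>k. A \<union> {(a,b,l). l = L \<and> k+1 \<le> b \<and> b < a \<and> a \<le> n}"
  have s: "good (?U k) (\<lambda>z. \<Sum>i\<in>{k<..<n}. f i z * z (i+1,k+1,L))"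
  proof (rule good_sum)
    fix i assume i: "i \<in> {k<..<n}"
    have "good (?U i \<union> {(i+1,k+1,L)}) (\<lambda>z. f i z * z (i+1,k+1,L))"
      by (rule good_mult[OF less.IH good_var]) (use i less.prems nA in auto)
    thus "good (?U k) (\<lambda>z. f i z * z (i+1,k+1,L))" by (rule good_mono) (use i in auto)
  qed simp
  have g: "good (?U k) (g k)" by (rule good_mono[OF gg[OF less.prems]]) auto
  have "f k = (\<lambda>z. g k z - (\<Sum>i\<in>{k<..<n}. f i z * z (i+1,k+1,L)))" using eq less.prems by auto
  thus ?case using good_diff[OF g s] by simp
qed

lemma sum_split_even: fixes F G :: "nat \<Rightarrow> complex" assumes "k < n"
  shows "(\<Sum>i<n. F i * (if i = k then 1 else if i < k then G i else 0)) = F k + (\<Sum>i<k. F i * G i)"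
proof -
  have "(\<Sum>i<n. F i * (if i = k then 1 else if i < k then G i else 0))
      = (\<Sum>i<n. (if i = k then F k else 0) + (if i \<in> {..<k} then F i * G i else 0))"
    by (rule sum.cong) auto
  also have "\<dots> = F k + (\<Sum>i\<in>{..<n} \<inter> {..<k}. F i * G i)"
    using assms by (simp add: sum.distrib sum.inter_restrict)
  also have "{..<n} \<inter> {..<k} = {..<k}" using assms by auto
  finally show ?thesis .
qed

lemma sum_split_odd: fixes F G :: "nat \<Rightarrow> complex" assumes "k < n"
  shows "(\<Sum>i<n. F i * (if i = k then 1 else if k < i then G i else 0)) = F k + (\<Sum>i\<in>{k<..<n}. F i * G i)"
proof -
  have "(\<Sum>i<n. F i * (if i = k then 1 else if k < i then G i else 0))
      = (\<Sum>i<n. (if i = k then F k else 0) + (if i \<in> {k<..<n} then F i * G i else 0))"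
    by (rule sum.cong) auto
  also have "\<dots> = F k + (\<Sum>i\<in>{..<n} \<inter> {k<..<n}. F i * G i)"
    using assms by (simp add: sum.distrib sum.inter_restrict)
  also have "{..<n} \<inter> {k<..<n} = {k<..<n}" using assms by auto
  finally show ?thesis .
qed

lemma eq_even: assumes "k < n" "even (Suc K)"
  shows "Psi n (Suc K) z $$ (n-1,k) = Psi n K z $$ (n-1,k)
     - (\<Sum>i<k. Psi n (Suc K) z $$ (n-1,i) * z (i+1,k+1,Suc K))"
proof -
  have "(\<Sum>i<n. Psi n (Suc K) z $$ (n-1,i) * Mmat n (Suc K) z $$ (i,k))
     = (\<Sum>i<n. Psi n (Suc K) z $$ (n-1,i) * (if i = k then 1 else if i < k then z (i+1,k+1,Suc K) else 0))"
    by (rule sum.cong) (use assms in \<open>simp_all add: Mmat_index del: Psi.simps\<close>)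
  also have "\<dots> = Psi n (Suc K) z $$ (n-1,k) + (\<Sum>i<k. Psi n (Suc K) z $$ (n-1,i) * z (i+1,k+1,Suc K))"
    by (rule sum_split_even[OF assms(1)])
  finally show ?thesis using key_eq[OF assms(1), of K z] by (simp add: eq_diff_eq del: Psi.simps)
qed

lemma eq_odd: assumes "k < n" "odd (Suc K)"
  shows "Psi n (Suc K) z $$ (n-1,k) = Psi n K z $$ (n-1,k)
     - (\<Sum>i\<in>{k<..<n}. Psi n (Suc K) z $$ (n-1,i) * z (i+1,k+1,Suc K))"
proof -
  have "(\<Sum>i<n. Psi n (Suc K) z $$ (n-1,i) * Mmat n (Suc K) z $$ (i,k))
     = (\<Sum>i<n. Psi n (Suc K) z $$ (n-1,i) * (if i = k then 1 else if k < i then z (i+1,k+1,Suc K) else 0))"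
    by (rule sum.cong) (use assms in \<open>simp_all add: Mmat_index del: Psi.simps\<close>)
  also have "\<dots> = Psi n (Suc K) z $$ (n-1,k) + (\<Sum>i\<in>{k<..<n}. Psi n (Suc K) z $$ (n-1,i) * z (i+1,k+1,Suc K))"
    by (rule sum_split_odd[OF assms(1)])
  finally show ?thesis using key_eq[OF assms(1), of K z] by (simp add: eq_diff_eq del: Psi.simps)
qed

lemma step_level:
  assumes gg: "\<And>k. k < n \<Longrightarrow> good (Vars n K) (\<lambda>z. Psi n K z $$ (n-1,k))" and k: "k < n"
  shows "(even (Suc K) \<longrightarrow> good (Vars n K \<union> {(a,b,l). l = Suc K \<and> 1 \<le> a \<and> a < b \<and> b \<le> k+1})
                 (\<lambda>z. Psi n (Suc K) z $$ (n-1,k)))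
       \<and> (odd (Suc K) \<longrightarrow> good (Vars n K \<union> {(a,b,l). l = Suc K \<and> k+1 \<le> b \<and> b < a \<and> a \<le> n})
                 (\<lambda>z. Psi n (Suc K) z $$ (n-1,k)))"
proof (intro conjI impI)
  have nA: "\<And>a b. (a,b,Suc K) \<notin> Vars n K" by (auto simp: Vars_def)
  assume e: "even (Suc K)"
  show "good (Vars n K \<union> {(a,b,l). l = Suc K \<and> 1 \<le> a \<and> a < b \<and> b \<le> k+1})
                 (\<lambda>z. Psi n (Suc K) z $$ (n-1,k))"
    by (rule even_step[where f="\<lambda>k z. Psi n (Suc K) z $$ (n-1,k)" and g="\<lambda>k z. Psi n K z $$ (n-1,k)"])
       (rule eq_even[OF _ e], assumption, rule gg, assumption, rule nA, rule k)
next
  have nA: "\<And>a b. (a,b,Suc K) \<notin> Vars n K" by (auto simp: Vars_def)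
  assume e: "odd (Suc K)"
  show "good (Vars n K \<union> {(a,b,l). l = Suc K \<and> k+1 \<le> b \<and> b < a \<and> a \<le> n})
                 (\<lambda>z. Psi n (Suc K) z $$ (n-1,k))"
    by (rule odd_step[where f="\<lambda>k z. Psi n (Suc K) z $$ (n-1,k)" and g="\<lambda>k z. Psi n K z $$ (n-1,k)"])
       (rule eq_odd[OF _ e], assumption, rule gg, assumption, rule nA, rule k)
qed

lemma all_levels: "k < n \<Longrightarrow> good (Vars n K) (\<lambda>z. Psi n K z $$ (n-1,k))"
proof (induction K arbitrary: k)
  case 0
  show ?case using good_const[of "Vars n 0" "1\<^sub>m n $$ (n-1,k)"] by simp
next
  case (Suc K)
  have gg: "\<And>k. k < n \<Longrightarrow> good (Vars n K) (\<lambda>z. Psi n K z $$ (n-1,k))" by (rule Suc.IH)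
  have st: "(even (Suc K) \<longrightarrow> good (Vars n K \<union> {(a,b,l). l = Suc K \<and> 1 \<le> a \<and> a < b \<and> b \<le> k+1})
                 (\<lambda>z. Psi n (Suc K) z $$ (n-1,k)))
       \<and> (odd (Suc K) \<longrightarrow> good (Vars n K \<union> {(a,b,l). l = Suc K \<and> k+1 \<le> b \<and> b < a \<and> a \<le> n})
                 (\<lambda>z. Psi n (Suc K) z $$ (n-1,k)))"
    by (rule step_level[OF gg Suc.prems])
  show ?case
  proof (cases "even (Suc K)")
    case True
    show ?thesis by (rule good_mono[OF st[THEN conjunct1, rule_format, OF True]])
      (use True Suc.prems in \<open>auto simp: Vars_def\<close>)
  next
    case False
    show ?thesis by (rule good_mono[OF st[THEN conjunct2, rule_format, OF False]])
      (use False Suc.prems in \<open>auto simp: Vars_def\<close>)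
  qed
qed

theorem mainTheorem10:
  fixes n K k :: nat
  assumes "n \<ge> 2" and "K \<ge> 1" and "1 \<le> k" and "k \<le> n"
  shows "polyfun (Pcomp n K k)
    \<and> (\<forall>v \<in> Vars n K. at_most_linear_in v (Pcomp n K k))
    \<and> (even K \<longrightarrow> depends_only_on
          {(i,j,l) \<in> Vars n K. l < K \<or> (l = K \<and> 1 \<le> i \<and> i < j \<and> j \<le> k)} (Pcomp n K k))
    \<and> (odd K \<longrightarrow> depends_only_on
          {(i,j,l) \<in> Vars n K. l < K \<or> (l = K \<and> k \<le> j \<and> j < i \<and> i \<le> n)} (Pcomp n K k))"
proof -
  obtain K0 where K0: "K = Suc K0" using assms(2) by (cases K) auto
  have k1: "k - 1 < n" using assms by auto
  have P: "Pcomp n K k = (\<lambda>z. Psi n (Suc K0) z $$ (n-1,k-1))" unfolding Pcomp_def K0 by simp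
  note st = step_level[OF all_levels k1, of K0]
  let ?E = "{(i,j,l) \<in> Vars n K. l < K \<or> (l = K \<and> 1 \<le> i \<and> i < j \<and> j \<le> k)}"
  let ?O = "{(i,j,l) \<in> Vars n K. l < K \<or> (l = K \<and> k \<le> j \<and> j < i \<and> i \<le> n)}"
  show ?thesis
  proof (cases "even K")
    case True
    have "good ?E (Pcomp n K k)" unfolding P
      by (rule good_mono[OF st[THEN conjunct1, rule_format]])
         (use True assms K0 in \<open>auto simp: Vars_def\<close>)
    thus ?thesis using True unfolding good_def by auto
  next
    case False
    have "good ?O (Pcomp n K k)" unfolding P
      by (rule good_mono[OF st[THEN conjunct2, rule_format]])
         (use False assms K0 in \<open>auto simp: Vars_def\<close>)
    thus ?thesis using False unfolding good_def by auto
  qed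
qed

end
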